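(* Let $s\in(0,1)$, $p\in(1,+\infty)$, $\kappa\in(0,+\infty)$, and $r_1,r_2\in[0,+\infty)$ with $|B_{r_2}|\ge\kappa$. Define $$l(B_{r_2}):=\begin{cases}|B_{r_2}|^{\frac{1-sp}{n}}&\text{if } s\in(0,\frac1p),\\ |\ln|B_{r_2}||&\text{if } s=\frac1p,\\ 1&\text{if } s\in(\frac1p,1).\end{cases}$$ Then there exists $\hat c\in(0,+\infty)$ depending only on $\kappa,n,p$ such that $$L\big(B_{r_2},\mathbb R^n\setminus B_{r_2+r_1}\big)+|B_{r_2+r_1}\setminus B_{r_2}|\ge\hat c\,|B_{r_2}|^{\frac{n-1}{n}}\,l(B_{r_2}).$$
   Context: $B_r$ is the open ball of radius $r$ centered at $0$ in $\mathbb R^n$, $|\cdot|$ Lebesgue measure. For measurable $A,D\subset\mathbb R^n$, $L(A,D):=\int_A\int_D\frac{dx\,dy}{|x-y|^{n+sp}}$. *)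

theory Defs
  imports "HOL-Analysis.Analysis"
begin

definition fracL :: "real \<Rightarrow> real \<Rightarrow> 'a::euclidean_space set \<Rightarrow> 'a set \<Rightarrow> ennreal" where
  "fracL s p A D =
     (\<integral>\<^sup>+ x. \<integral>\<^sup>+ y. indicator A x * indicator D y *
        ennreal (1 / norm (x - y) powr (real DIM('a) + s * p)) \<partial>lborel \<partial>lborel)"

text \<open>The factor l(B) as a function of v = |B|.\<close>
definition lfac :: "real \<Rightarrow> real \<Rightarrow> nat \<Rightarrow> real \<Rightarrow> real" where
  "lfac s p n v = (if s < 1 / p then v powr ((1 - s * p) / real n)
                   else if s = 1 / p then \<bar>ln v\<bar> else 1)"

end

theory Submission
  imports Defs
begin

lemma pow_diff_ge:
  fixes a b :: real
  assumes "0 \<le> b" "b \<le> a"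
  shows "(a - b) * a ^ m \<le> a ^ Suc m - b ^ Suc m"
proof (induction m)
  case 0 then show ?case by simp
next
  case (Suc m)
  have "a ^ Suc (Suc m) - b ^ Suc (Suc m) = a * (a ^ Suc m - b ^ Suc m) + (a - b) * b ^ Suc m"
    by (simp add: algebra_simps)
  also have "\<dots> \<ge> a * ((a - b) * a ^ m) + 0"
    using Suc assms by (intro add_mono mult_left_mono) auto
  finally show ?case by (simp add: algebra_simps)
qed

lemma inner_bound:
  fixes x :: "'a::euclidean_space"
  assumes D: "D > 0" and x: "norm x \<ge> R - D" and al: "\<alpha> \<ge> 0"
  shows "ennreal (unit_ball_vol DIM('a) * D ^ DIM('a) / (3*D) powr \<alpha>)
     \<le> (\<integral>\<^sup>+y. indicator (- ball 0 R) y * ennreal (1 / norm (x - y) powr \<alpha>) \<partial>lborel)"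
proof -
  obtain b :: 'a where b: "b \<in> Basis" using nonempty_Basis by blast
  define u where "u = (if x = 0 then b else sgn x)"
  have nu: "norm u = 1" using b by (auto simp: u_def norm_sgn)
  define c where "c = x + (2*D) *\<^sub>R u"
  have nc: "norm c = norm x + 2*D"
  proof (cases "x = 0")
    case True then show ?thesis using nu D by (simp add: c_def u_def)
  next
    case False
    have "c = (norm x + 2*D) *\<^sub>R sgn x" using False
      by (simp add: c_def u_def sgn_div_norm algebra_simps scaleR_add_left)
    then show ?thesis using False D by (simp add: norm_sgn)
  qed
  have "(\<integral>\<^sup>+y. ennreal (1 / (3*D) powr \<alpha>) * indicator (ball c D) y \<partial>lborel)
      \<le> (\<integral>\<^sup>+y. indicator (- ball 0 R) y * ennreal (1 / norm (x - y) powr \<alpha>) \<partial>lborel)"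
  proof (rule nn_integral_mono)
    fix y :: 'a
    show "ennreal (1 / (3*D) powr \<alpha>) * indicator (ball c D) y
        \<le> indicator (- ball 0 R) y * ennreal (1 / norm (x - y) powr \<alpha>)"
    proof (cases "y \<in> ball c D")
      case False then show ?thesis by simp
    next
      case True
      then have dy: "norm (c - y) < D" by (simp add: dist_norm)
      have "norm c \<le> norm y + norm (c - y)" by (metis norm_triangle_sub)
      then have ny: "norm y > norm x + D" using nc dy by linarith
      then have yR: "y \<in> - ball 0 R" using x by auto
      have "norm (x - c) = 2 * D" using nu D by (simp add: c_def)
      moreover have "norm (x - y) \<le> norm (x - c) + norm (c - y)"
        using norm_triangle_ineq[of "x - c" "c - y"] by simp
      ultimately have le: "norm (x - y) \<le> 3 * D" using dy by linarith
      have pos: "norm (x - y) > 0"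
      proof -
        have "norm y \<le> norm x + norm (x - y)" by (metis norm_triangle_sub norm_minus_commute)
        then show ?thesis using ny D by linarith
      qed
      have "norm (x - y) powr \<alpha> \<le> (3*D) powr \<alpha>" using le pos al by (intro powr_mono2) auto
      then have "1 / (3*D) powr \<alpha> \<le> 1 / norm (x - y) powr \<alpha>" using pos D
        by (intro divide_left_mono) (auto intro!: mult_pos_pos)
      then show ?thesis using True yR by (simp add: ennreal_leI)
    qed
  qed
  moreover have "(\<integral>\<^sup>+y. ennreal (1 / (3*D) powr \<alpha>) * indicator (ball c D) y \<partial>lborel)
     = ennreal (unit_ball_vol DIM('a) * D ^ DIM('a) / (3*D) powr \<alpha>)"
    using D by (simp add: nn_integral_cmult_indicator emeasure_ball ennreal_mult'[symmetric])
  ultimately show ?thesis by simp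
qed

lemma frac_lower:
  fixes A E :: "'a::euclidean_space set"
  assumes "\<And>x. x \<in> A \<Longrightarrow> g x \<le> (\<integral>\<^sup>+y. indicator E y * ennreal (1 / norm (x - y) powr (real DIM('a) + s * p)) \<partial>lborel)"
    and "\<And>x. x \<notin> A \<Longrightarrow> g x = 0"
  shows "(\<integral>\<^sup>+x. g x \<partial>lborel) \<le> fracL s p A E"
  unfolding fracL_def
proof (rule nn_integral_mono)
  fix x show "g x \<le> (\<integral>\<^sup>+y. indicator A x * indicator E y * ennreal (1 / norm (x - y) powr (real DIM('a) + s * p)) \<partial>lborel)"
    using assms[of x] by (cases "x \<in> A") auto
qed

lemma ann_meas:
  assumes "0 \<le> a" "a \<le> b"
  shows "emeasure lborel (ball (0::'a::euclidean_space) b - ball 0 a)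
     = ennreal (unit_ball_vol DIM('a) * (b ^ DIM('a) - a ^ DIM('a)))"
proof -
  have sub: "ball (0::'a) a \<subseteq> ball 0 b" using assms by auto
  have "emeasure lborel (ball (0::'a) b - ball 0 a) = emeasure lborel (ball (0::'a) b) - emeasure lborel (ball (0::'a) a)"
    using sub emeasure_lborel_ball_finite[of "0::'a" a] by (intro emeasure_Diff) auto
  also have "\<dots> = ennreal (unit_ball_vol DIM('a) * b ^ DIM('a)) - ennreal (unit_ball_vol DIM('a) * a ^ DIM('a))"
    using assms by (simp add: emeasure_ball)
  also have "\<dots> = ennreal (unit_ball_vol DIM('a) * b ^ DIM('a) - unit_ball_vol DIM('a) * a ^ DIM('a))"
    using assms by (intro ennreal_minus) auto
  finally show ?thesis by (simp add: algebra_simps)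
qed

lemma shell_bound:
  fixes s p r R D a b :: real
  assumes "0 \<le> s" "0 \<le> p" "0 \<le> a" "a \<le> b" "b \<le> r" "D > 0" "a \<ge> R - D"
  shows "ennreal (unit_ball_vol DIM('a) * D ^ DIM('a) / (3*D) powr (real DIM('a) + s * p)
            * (unit_ball_vol DIM('a) * (b ^ DIM('a) - a ^ DIM('a))))
         \<le> fracL s p (ball (0::'a::euclidean_space) r) (- ball 0 R)"
proof -
  define k where "k = unit_ball_vol DIM('a) * D ^ DIM('a) / (3*D) powr (real DIM('a) + s * p)"
  have k0: "k \<ge> 0" using assms by (simp add: k_def)
  have "(\<integral>\<^sup>+x. ennreal k * indicator (ball (0::'a) b - ball 0 a) x \<partial>lborel) \<le> fracL s p (ball (0::'a) r) (- ball 0 R)"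
  proof (rule frac_lower)
    fix x :: 'a assume x: "x \<in> ball 0 r"
    show "ennreal k * indicator (ball 0 b - ball 0 a) x \<le> (\<integral>\<^sup>+y. indicator (- ball 0 R) y * ennreal (1 / norm (x - y) powr (real DIM('a) + s * p)) \<partial>lborel)"
    proof (cases "x \<in> ball 0 b - ball 0 a")
      case True
      then have "norm x \<ge> R - D" using assms by auto
      from inner_bound[OF assms(6) this, of "real DIM('a) + s * p"] assms
      show ?thesis using True by (simp add: k_def)
    qed simp
  next
    fix x :: 'a assume "x \<notin> ball 0 r"
    then show "ennreal k * indicator (ball 0 b - ball 0 a) x = 0" using assms by auto
  qed
  moreover have "(\<integral>\<^sup>+x. ennreal k * indicator (ball (0::'a) b - ball 0 a) x \<partial>lborel)
      = ennreal (k * (unit_ball_vol DIM('a) * (b ^ DIM('a) - a ^ DIM('a))))"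
    using assms k0 by (simp add: nn_integral_cmult_indicator ann_meas ennreal_mult)
  ultimately show ?thesis by (simp add: k_def)
qed

lemma exK:
  fixes x :: real
  assumes "x > 0"
  shows "\<exists>K::nat. 2 ^ K \<le> max x 1 \<and> ln x \<le> real K + 1"
proof -
  define K where "K = nat \<lfloor>log 2 x\<rfloor>"
  have "2 ^ K \<le> max x 1"
  proof (cases "x \<ge> 1")
    case True
    then have "log 2 x \<ge> 0" by simp
    then have "real K \<le> log 2 x" by (simp add: K_def)
    then have "2 powr real K \<le> 2 powr log 2 x" by simp
    then show ?thesis using assms by (simp add: powr_realpow)
  next
    case False
    then have "log 2 x < 0" using assms by simp
    then have "K = 0" by (simp add: K_def)
    then show ?thesis by simp
  qed
  moreover have "ln x \<le> real K + 1"
  proof -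
    have "log 2 x < real K + 1" unfolding K_def by linarith
    then have h1: "ln x < (real K + 1) * ln 2" using assms by (simp add: log_def field_simps)
    have "ln (2::real) \<le> 1" using ln_le_minus_one[of 2] by simp
    have h2: "(real K + 1) * ln 2 \<le> (real K + 1) * 1"
      using \<open>ln (2::real) \<le> 1\<close> by (intro mult_left_mono) auto
    from less_le_trans[OF h1 h2] show ?thesis by simp
  qed
  ultimately show ?thesis by blast
qed

lemma multi_shell:
  fixes s p r t T :: real and K :: nat
  assumes sp: "0 \<le> s" "0 \<le> p" "s * p = 1" and t: "0 \<le> t" "t \<le> T" "0 < T" and TK: "T * 2 ^ K \<le> r"
  shows "ennreal (real K * (unit_ball_vol DIM('a) ^ 2 / 3 ^ (DIM('a) + 2) * (r / 2) ^ (DIM('a) - 1)))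
          \<le> fracL s p (ball (0::'a::euclidean_space) r) (- ball 0 (r + t))"
proof -
  define \<omega> where "\<omega> = unit_ball_vol DIM('a)"
  have \<omega>0: "\<omega> > 0" by (simp add: \<omega>_def)
  define d :: "nat \<Rightarrow> real" where "d k = T * 2 ^ k" for k
  define S :: "nat \<Rightarrow> 'a set" where "S k = ball 0 (r - d k) - ball 0 (r - 2 * d k)" for k
  define c :: "nat \<Rightarrow> real" where "c k = \<omega> / (3 ^ (DIM('a) + 2) * d k)" for k
  have d0: "d k \<ge> T" for k using t by (simp add: d_def)
  have dpos: "d k > 0" for k using t by (simp add: d_def)
  have d2: "2 * d k \<le> r" if "k < K" for k
  proof -
    have "(2::real) ^ Suc k \<le> 2 ^ K" using that by (intro power_increasing) auto
    then have "T * 2 ^ Suc k \<le> T * 2 ^ K" using t by simp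
    then show ?thesis using TK by (simp add: d_def)
  qed
  have c0: "c k \<ge> 0" for k using \<omega>0 dpos[of k] by (simp add: c_def)
  have disj: "j = k" if "x \<in> S j" "x \<in> S k" for j k x
  proof (rule ccontr)
    assume "j \<noteq> k"
    then consider "j < k" | "k < j" by linarith
    then show False
    proof cases
      case 1
      have "(2::real) ^ Suc j \<le> 2 ^ k" using 1 by (intro power_increasing) auto
      then have "2 * d j \<le> d k" using t by (simp add: d_def)
      then show False using that by (auto simp: S_def)
    next
      case 2
      have "(2::real) ^ Suc k \<le> 2 ^ j" using 2 by (intro power_increasing) auto
      then have "2 * d k \<le> d j" using t by (simp add: d_def)
      then show False using that by (auto simp: S_def)
    qed
  qed
  define g where "g x = (\<Sum>k<K. ennreal (c k) * indicator (S k) x)" for x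
  have gcol: "g x = ennreal (c j)" if "j < K" "x \<in> S j" for x j
  proof -
    have "g x = ennreal (c j) * indicator (S j) x + (\<Sum>k\<in>{..<K} - {j}. ennreal (c k) * indicator (S k) x)"
      unfolding g_def using that by (subst sum.remove[of _ j]) auto
    also have "(\<Sum>k\<in>{..<K} - {j}. ennreal (c k) * indicator (S k) x) = 0"
      using disj that by (intro sum.neutral) (auto simp: indicator_def)
    finally show ?thesis using that by simp
  qed
  have "(\<integral>\<^sup>+x. g x \<partial>lborel) \<le> fracL s p (ball (0::'a) r) (- ball 0 (r + t))"
  proof (rule frac_lower)
    fix x :: 'a assume x: "x \<in> ball 0 r"
    show "g x \<le> (\<integral>\<^sup>+y. indicator (- ball 0 (r + t)) y * ennreal (1 / norm (x - y) powr (real DIM('a) + s * p)) \<partial>lborel)"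
    proof (cases "\<exists>j<K. x \<in> S j")
      case True
      then obtain j where j: "j < K" "x \<in> S j" by blast
      define D where "D = t + 2 * d j"
      have D0: "D > 0" using dpos[of j] t by (simp add: D_def)
      have "norm x \<ge> r + t - D" using j by (auto simp: S_def D_def)
      from inner_bound[OF D0 this, of "real DIM('a) + s * p"] sp
      have ib: "ennreal (\<omega> * D ^ DIM('a) / (3 * D) powr (real DIM('a) + s * p)) \<le> (\<integral>\<^sup>+y. indicator (- ball 0 (r + t)) y * ennreal (1 / norm (x - y) powr (real DIM('a) + s * p)) \<partial>lborel)"
        by (simp add: \<omega>_def)
      have "(3 * D) powr (real DIM('a) + s * p) = (3 * D) powr real (DIM('a) + 1)"
        using sp by (simp add: add.commute)
      also have "\<dots> = (3 * D) ^ (DIM('a) + 1)"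
        using D0 by (intro powr_realpow) simp
      finally have "(3 * D) powr (real DIM('a) + s * p) = (3 * D) ^ (DIM('a) + 1)" .
      then have eq: "\<omega> * D ^ DIM('a) / (3 * D) powr (real DIM('a) + s * p) = \<omega> / (3 ^ (DIM('a) + 1) * D)"
        using D0 by (simp add: power_mult_distrib)
      have "D \<le> 3 * d j" using d0[of j] t by (simp add: D_def)
      then have "3 ^ (DIM('a) + 1) * D \<le> 3 ^ (DIM('a) + 2) * d j" by simp
      then have "c j \<le> \<omega> / (3 ^ (DIM('a) + 1) * D)" unfolding c_def using \<omega>0 D0
        by (intro divide_left_mono) auto
      then have "ennreal (c j) \<le> ennreal (\<omega> * D ^ DIM('a) / (3 * D) powr (real DIM('a) + s * p))"
        using eq by (simp add: ennreal_leI)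
      then show ?thesis using ib gcol[OF j] by simp
    next
      case False
      then have "g x = 0" unfolding g_def by (intro sum.neutral) auto
      then show ?thesis by simp
    qed
  next
    fix x :: 'a assume "x \<notin> ball 0 r"
    then have "x \<notin> S k" for k using dpos[of k] by (auto simp: S_def)
    then show "g x = 0" unfolding g_def by (intro sum.neutral) auto
  qed
  moreover have "(\<integral>\<^sup>+x. g x \<partial>lborel) = (\<Sum>k<K. ennreal (c k) * emeasure lborel (S k))"
    unfolding g_def by (subst nn_integral_sum) (auto simp: S_def nn_integral_cmult_indicator intro!: borel_measurable_times_ennreal borel_measurable_indicator)
  moreover have "ennreal (real K * (\<omega> ^ 2 / 3 ^ (DIM('a) + 2) * (r / 2) ^ (DIM('a) - 1)))
      \<le> (\<Sum>k<K. ennreal (c k) * emeasure lborel (S k))"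
  proof -
    have "ennreal (real K * (\<omega> ^ 2 / 3 ^ (DIM('a) + 2) * (r / 2) ^ (DIM('a) - 1)))
        = (\<Sum>k<K. ennreal (\<omega> ^ 2 / 3 ^ (DIM('a) + 2) * (r / 2) ^ (DIM('a) - 1)))"
      by (simp add: ennreal_of_nat_eq_real_of_nat ennreal_mult'[symmetric])
    also have "\<dots> \<le> (\<Sum>k<K. ennreal (c k) * emeasure lborel (S k))"
    proof (rule sum_mono)
      fix k assume "k \<in> {..<K}"
      then have k: "k < K" by simp
      have a0: "0 \<le> r - 2 * d k" using d2[OF k] by simp
      have ab: "r - 2 * d k \<le> r - d k" using dpos[of k] by simp
      have ms: "emeasure lborel (S k) = ennreal (\<omega> * ((r - d k) ^ DIM('a) - (r - 2 * d k) ^ DIM('a)))"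
        unfolding S_def \<omega>_def by (rule ann_meas[OF a0 ab])
      obtain m where m: "DIM('a) = Suc m" using DIM_positive[where 'a='a] by (metis Suc_pred)
      have "d k * (r - d k) ^ m \<le> (r - d k) ^ Suc m - (r - 2 * d k) ^ Suc m"
        using pow_diff_ge[OF a0 ab, of m] by simp
      moreover have "(r / 2) ^ m \<le> (r - d k) ^ m"
        using d2[OF k] dpos[of k] by (intro power_mono) auto
      ultimately have pd: "d k * (r / 2) ^ m \<le> (r - d k) ^ DIM('a) - (r - 2 * d k) ^ DIM('a)"
        using m dpos[of k] by (smt (verit) mult_left_mono)
      have "\<omega> ^ 2 / 3 ^ (DIM('a) + 2) * (r / 2) ^ (DIM('a) - 1) = c k * (\<omega> * (d k * (r / 2) ^ m))"
        using m dpos[of k] \<omega>0 by (simp add: c_def field_simps power2_eq_square)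
      also have "\<dots> \<le> c k * (\<omega> * ((r - d k) ^ DIM('a) - (r - 2 * d k) ^ DIM('a)))"
        using pd c0[of k] \<omega>0 by (intro mult_left_mono) auto
      finally have "ennreal (\<omega> ^ 2 / 3 ^ (DIM('a) + 2) * (r / 2) ^ (DIM('a) - 1))
           \<le> ennreal (c k * (\<omega> * ((r - d k) ^ DIM('a) - (r - 2 * d k) ^ DIM('a))))"
        by (rule ennreal_leI)
      also have "\<dots> = ennreal (c k) * emeasure lborel (S k)"
        using ms c0[of k] by (simp add: ennreal_mult')
      finally show "ennreal (\<omega> ^ 2 / 3 ^ (DIM('a) + 2) * (r / 2) ^ (DIM('a) - 1)) \<le> ennreal (c k) * emeasure lborel (S k)" .
    qed
    finally show ?thesis .
  qed
  ultimately show ?thesis by (simp add: \<omega>_def)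
qed

lemma kern_eq:
  fixes D \<sigma> w :: real and n :: nat
  assumes "D > 0"
  shows "w * D ^ n / (3 * D) powr (real n + \<sigma>) = w / (3 ^ n * (3 * D) powr \<sigma>)"
proof -
  have "(3 * D) powr (real n + \<sigma>) = (3 * D) ^ n * (3 * D) powr \<sigma>"
    using assms by (simp add: powr_add powr_realpow)
  then show ?thesis using assms by (simp add: power_mult_distrib field_simps)
qed

lemma M_bound:
  fixes r t :: real
  assumes "0 < r" "0 \<le> t"
  shows "ennreal (unit_ball_vol DIM('a) * t * r ^ (DIM('a) - 1))
     \<le> emeasure lborel (ball (0::'a::euclidean_space) (r + t) - ball 0 r)"
proof -
  obtain m where m: "DIM('a) = Suc m" using DIM_positive[where 'a='a] by (metis Suc_pred)
  have "t * (r + t) ^ m \<le> (r + t) ^ Suc m - r ^ Suc m"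
    using pow_diff_ge[of r "r + t" m] assms by simp
  moreover have "r ^ m \<le> (r + t) ^ m" using assms by (intro power_mono) auto
  ultimately have "t * r ^ m \<le> (r + t) ^ DIM('a) - r ^ DIM('a)"
    using m assms by (smt (verit) mult_left_mono)
  then have "unit_ball_vol DIM('a) * t * r ^ (DIM('a) - 1) \<le> unit_ball_vol DIM('a) * ((r + t) ^ DIM('a) - r ^ DIM('a))"
    using m by (simp add: mult.assoc)
  then show ?thesis using assms by (simp add: ann_meas ennreal_leI)
qed

lemma B_bound:
  fixes r t s p m :: real
  assumes s: "0 < s" "s < 1" and p: "1 < p" and sp: "1 \<le> s * p"
    and r: "0 < r" and t: "0 \<le> t" and m: "0 < m" "m \<le> 1" "m \<le> r"
  shows "ennreal (min (unit_ball_vol DIM('a)) (unit_ball_vol DIM('a) ^ 2 * m / (3 ^ DIM('a) * 6 powr p)) * r ^ (DIM('a) - 1))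
    \<le> fracL s p (ball (0::'a::euclidean_space) r) (- ball 0 (r + t)) + emeasure lborel (ball (0::'a) (r + t) - ball 0 r)"
  (is "ennreal (?c * _) \<le> ?L + ?M")
proof -
  define \<omega> where "\<omega> = unit_ball_vol DIM('a)"
  have \<omega>0: "\<omega> > 0" by (simp add: \<omega>_def)
  have rn0: "r ^ (DIM('a) - 1) \<ge> 0" using r by simp
  have LM1: "?M \<le> ?L + ?M" by (rule add_increasing) auto
  have LM2: "?L \<le> ?L + ?M" by (rule add_increasing2) auto
  show ?thesis
  proof (cases "t \<ge> 1")
    case True
    have c1: "?c \<le> \<omega>" unfolding \<omega>_def by (rule min.cobounded1)
    have c2: "\<omega> \<le> \<omega> * t" using True \<omega>0 by simp
    have "?c * r ^ (DIM('a) - 1) \<le> \<omega> * t * r ^ (DIM('a) - 1)"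
      using c1 c2 rn0 by (intro mult_right_mono) auto
    then have "ennreal (?c * r ^ (DIM('a) - 1)) \<le> ennreal (\<omega> * t * r ^ (DIM('a) - 1))"
      by (rule ennreal_leI)
    also have "\<dots> \<le> ?M" using M_bound[of r t, where 'a='a] r t unfolding \<omega>_def by simp
    also note LM1
    finally show ?thesis .
  next
    case False
    define a where "a = min r 1"
    define D where "D = t + a"
    have a: "0 < a" "a \<le> r" "m \<le> a" "a \<le> 1" using r m by (auto simp: a_def)
    have D: "0 < D" "D \<le> 2" using a t False by (auto simp: D_def)
    have sb: "ennreal (\<omega> * D ^ DIM('a) / (3*D) powr (real DIM('a) + s * p) * (\<omega> * (r ^ DIM('a) - (r - a) ^ DIM('a)))) \<le> ?L"
      using shell_bound[of s p "r - a" r r D "r + t", where 'a='a] s p a D unfolding \<omega>_def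
      by (simp add: D_def)
    have k: "\<omega> * D ^ DIM('a) / (3*D) powr (real DIM('a) + s * p) = \<omega> / (3 ^ DIM('a) * (3 * D) powr (s * p))"
      using kern_eq[OF D(1)] by simp
    have "(3 * D) powr (s * p) \<le> 6 powr (s * p)" using D s p by (intro powr_mono2) auto
    also have "\<dots> \<le> 6 powr p" using s p by (intro powr_mono) auto
    finally have "\<omega> / (3 ^ DIM('a) * 6 powr p) \<le> \<omega> / (3 ^ DIM('a) * (3 * D) powr (s * p))"
      using \<omega>0 D by (intro divide_left_mono mult_left_mono) auto
    then have k2: "\<omega> / (3 ^ DIM('a) * 6 powr p) \<le> \<omega> * D ^ DIM('a) / (3*D) powr (real DIM('a) + s * p)"
      using k by simp
    obtain j where j: "DIM('a) = Suc j" using DIM_positive[where 'a='a] by (metis Suc_pred)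
    have "a * r ^ j \<le> r ^ Suc j - (r - a) ^ Suc j" using pow_diff_ge[of "r - a" r j] a by simp
    moreover have "m * r ^ j \<le> a * r ^ j" using a r by (intro mult_right_mono) auto
    ultimately have pd: "m * r ^ (DIM('a) - 1) \<le> r ^ DIM('a) - (r - a) ^ DIM('a)" using j by simp
    have "?c * r ^ (DIM('a) - 1) \<le> (\<omega> / (3 ^ DIM('a) * 6 powr p)) * (\<omega> * (m * r ^ (DIM('a) - 1)))"
    proof -
      have "?c \<le> \<omega> ^ 2 * m / (3 ^ DIM('a) * 6 powr p)" unfolding \<omega>_def by simp
      also have "\<dots> = (\<omega> / (3 ^ DIM('a) * 6 powr p)) * (\<omega> * m)" by (simp add: power2_eq_square)
      finally have "?c * r ^ (DIM('a) - 1) \<le> (\<omega> / (3 ^ DIM('a) * 6 powr p)) * (\<omega> * m) * r ^ (DIM('a) - 1)"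
        using rn0 by (rule mult_right_mono)
      then show ?thesis by (simp add: mult.assoc)
    qed
    also have "\<dots> \<le> (\<omega> * D ^ DIM('a) / (3*D) powr (real DIM('a) + s * p)) * (\<omega> * (r ^ DIM('a) - (r - a) ^ DIM('a)))"
    proof (rule mult_mono)
      show "\<omega> * (m * r ^ (DIM('a) - 1)) \<le> \<omega> * (r ^ DIM('a) - (r - a) ^ DIM('a))"
        using pd \<omega>0 by simp
      show "0 \<le> \<omega> * D ^ DIM('a) / (3 * D) powr (real DIM('a) + s * p)" using \<omega>0 D by simp
      show "0 \<le> \<omega> * (m * r ^ (DIM('a) - 1))" using \<omega>0 m r by simp
    qed (rule k2)
    finally have "?c * r ^ (DIM('a) - 1) \<le> (\<omega> * D ^ DIM('a) / (3*D) powr (real DIM('a) + s * p)) * (\<omega> * (r ^ DIM('a) - (r - a) ^ DIM('a)))" .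
    then have "ennreal (?c * r ^ (DIM('a) - 1)) \<le> ennreal ((\<omega> * D ^ DIM('a) / (3*D) powr (real DIM('a) + s * p)) * (\<omega> * (r ^ DIM('a) - (r - a) ^ DIM('a))))"
      by (rule ennreal_leI)
    also note sb
    also note LM2
    finally show ?thesis .
  qed
qed

lemma rpow_ge_m:
  fixes r m \<sigma> :: real
  assumes "0 < r" "m \<le> 1" "m \<le> r" "0 \<le> \<sigma>" "\<sigma> \<le> 1"
  shows "m \<le> r powr \<sigma>"
proof (cases "r \<ge> 1")
  case True
  then have "1 \<le> r powr \<sigma>" using assms by (simp add: ge_one_powr_ge_zero)
  then show ?thesis using assms by simp
next
  case False
  then have "r powr 1 \<le> r powr \<sigma>" using assms by (intro powr_mono') auto
  then show ?thesis using assms by simp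
qed

lemma alg_aux:
  fixes a b c d :: real
  assumes "d > 0"
  shows "a ^ 2 / (b * 6) * (c / d) = a / (b * (6 * d)) * (a * c)"
  using assms by (simp add: power2_eq_square)

lemma A_bound:
  fixes r t s p m :: real
  assumes s: "0 < s" "s < 1" and p: "1 < p" and sp: "s * p < 1"
    and r: "0 < r" and t: "0 \<le> t" and m: "0 < m" "m \<le> 1" "m \<le> r"
  shows "ennreal (min (unit_ball_vol DIM('a) ^ 2 / (3 ^ DIM('a) * 6)) (unit_ball_vol DIM('a) * m) * r powr (real DIM('a) - s * p))
    \<le> fracL s p (ball (0::'a::euclidean_space) r) (- ball 0 (r + t)) + emeasure lborel (ball (0::'a) (r + t) - ball 0 r)"
  (is "ennreal (?c * _) \<le> ?L + ?M")
proof -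
  define \<omega> where "\<omega> = unit_ball_vol DIM('a)"
  have \<omega>0: "\<omega> > 0" by (simp add: \<omega>_def)
  have LM1: "?M \<le> ?L + ?M" by (rule add_increasing) auto
  have LM2: "?L \<le> ?L + ?M" by (rule add_increasing2) auto
  have sp0: "0 \<le> s * p" using s p by simp
  have rsp: "r powr (s * p) > 0" using r by simp
  have rdiff: "r powr (real DIM('a) - s * p) = r ^ DIM('a) / r powr (s * p)"
    using r by (simp add: powr_diff powr_realpow)
  have rpos: "r powr (real DIM('a) - s * p) \<ge> 0" by simp
  show ?thesis
  proof (cases "t \<ge> r")
    case True
    have "m \<le> r powr (s * p)" using rpow_ge_m[of r m "s * p"] r m sp sp0 by simp
    then have "m * r powr (real DIM('a) - s * p) \<le> r powr (s * p) * r powr (real DIM('a) - s * p)"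
      using rpos by (intro mult_right_mono) auto
    also have "\<dots> = r ^ DIM('a)" using rdiff rsp by simp
    also have "\<dots> = r * r ^ (DIM('a) - 1)"
    proof -
      obtain j where "DIM('a) = Suc j" using DIM_positive[where 'a='a] by (metis Suc_pred)
      then show ?thesis by simp
    qed
    also have "\<dots> \<le> t * r ^ (DIM('a) - 1)" using True r by (intro mult_right_mono) auto
    finally have h: "m * r powr (real DIM('a) - s * p) \<le> t * r ^ (DIM('a) - 1)" .
    have "?c * r powr (real DIM('a) - s * p) \<le> \<omega> * m * r powr (real DIM('a) - s * p)"
      unfolding \<omega>_def using rpos by (intro mult_right_mono) auto
    also have "\<dots> \<le> \<omega> * t * r ^ (DIM('a) - 1)" using mult_left_mono[OF h, of \<omega>] \<omega>0
      by (simp add: mult.assoc)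
    finally have "ennreal (?c * r powr (real DIM('a) - s * p)) \<le> ennreal (\<omega> * t * r ^ (DIM('a) - 1))"
      by (rule ennreal_leI)
    also have "\<dots> \<le> ?M" using M_bound[of r t, where 'a='a] r t unfolding \<omega>_def by simp
    also note LM1
    finally show ?thesis .
  next
    case False
    define D where "D = r + t"
    have D: "0 < D" "D \<le> 2 * r" using r t False by (auto simp: D_def)
    have sb: "ennreal (\<omega> * D ^ DIM('a) / (3*D) powr (real DIM('a) + s * p) * (\<omega> * (r ^ DIM('a) - 0 ^ DIM('a)))) \<le> ?L"
      using shell_bound[of s p 0 r r D "r + t", where 'a='a] s p r D unfolding \<omega>_def
      by (simp add: D_def)
    have k: "\<omega> * D ^ DIM('a) / (3*D) powr (real DIM('a) + s * p) = \<omega> / (3 ^ DIM('a) * (3 * D) powr (s * p))"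
      using kern_eq[OF D(1)] by simp
    have "(3 * D) powr (s * p) \<le> (6 * r) powr (s * p)" using D sp0 by (intro powr_mono2) auto
    also have "\<dots> = 6 powr (s * p) * r powr (s * p)" using r by (simp add: powr_mult)
    also have "\<dots> \<le> 6 * r powr (s * p)"
    proof -
      have "6 powr (s * p) \<le> (6::real) powr 1" using sp by (intro powr_mono) auto
      then show ?thesis using rsp by (intro mult_right_mono) auto
    qed
    finally have "\<omega> / (3 ^ DIM('a) * (6 * r powr (s * p))) \<le> \<omega> / (3 ^ DIM('a) * (3 * D) powr (s * p))"
      using \<omega>0 D by (intro divide_left_mono mult_left_mono) auto
    then have k2: "\<omega> / (3 ^ DIM('a) * (6 * r powr (s * p))) \<le> \<omega> * D ^ DIM('a) / (3*D) powr (real DIM('a) + s * p)"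
      using k by simp
    have "?c * r powr (real DIM('a) - s * p) \<le> \<omega> ^ 2 / (3 ^ DIM('a) * 6) * r powr (real DIM('a) - s * p)"
      unfolding \<omega>_def using rpos by (intro mult_right_mono) auto
    also have "\<dots> = \<omega> / (3 ^ DIM('a) * (6 * r powr (s * p))) * (\<omega> * r ^ DIM('a))"
      unfolding rdiff using alg_aux[OF rsp] by simp
    also have "\<dots> \<le> (\<omega> * D ^ DIM('a) / (3*D) powr (real DIM('a) + s * p)) * (\<omega> * (r ^ DIM('a) - 0 ^ DIM('a)))"
    proof -
      have z: "r ^ DIM('a) - (0::real) ^ DIM('a) = r ^ DIM('a)" by simp
      show ?thesis unfolding z using k2 \<omega>0 r by (intro mult_right_mono) auto
    qed
    finally have "ennreal (?c * r powr (real DIM('a) - s * p)) \<le> ennreal ((\<omega> * D ^ DIM('a) / (3*D) powr (real DIM('a) + s * p)) * (\<omega> * (r ^ DIM('a) - 0 ^ DIM('a))))"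
      by (rule ennreal_leI)
    also note sb
    also note LM2
    finally show ?thesis .
  qed
qed

lemma C_bound:
  fixes r t s p :: real
  assumes sp: "0 \<le> s" "0 \<le> p" "s * p = 1" and r: "0 < r" and t: "0 \<le> t"
  shows "\<exists>K::nat. ennreal (real K * (unit_ball_vol DIM('a) ^ 2 / 3 ^ (DIM('a) + 2) * (r / 2) ^ (DIM('a) - 1)))
          \<le> fracL s p (ball (0::'a::euclidean_space) r) (- ball 0 (r + t)) \<and> ln r \<le> real K + 1 + t"
proof -
  define T where "T = max t 1"
  have T: "0 < T" "t \<le> T" "T - 1 \<le> t" "1 \<le> T" using t by (auto simp: T_def)
  obtain K :: nat where K: "2 ^ K \<le> max (r / T) 1" "ln (r / T) \<le> real K + 1"
    using exK[of "r / T"] r T by auto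
  have "ln T \<le> T - 1" using T by (intro ln_le_minus_one) auto
  moreover have "ln r = ln (r / T) + ln T" using r T by (simp add: ln_div)
  ultimately have lnr: "ln r \<le> real K + 1 + t" using K T by linarith
  show ?thesis
  proof (cases "K = 0")
    case True
    then show ?thesis using lnr by (intro exI[of _ 0]) auto
  next
    case False
    then have "(2::real) ^ K \<ge> 2 ^ 1" by (intro power_increasing) auto
    then have "2 ^ K \<le> r / T" using K(1) by (auto simp: max_def split: if_splits)
    then have "T * 2 ^ K \<le> r" using T by (simp add: field_simps)
    from multi_shell[OF sp t(1) T(2) T(1) this, where 'a='a] show ?thesis using lnr by blast
  qed
qed

lemma powr_le_max1:
  fixes x e :: real
  assumes "0 < x" "0 \<le> e" "e \<le> 1"
  shows "x powr e \<le> max 1 x"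
proof (cases "x \<ge> 1")
  case True
  then have "x powr e \<le> x powr 1" using assms by (intro powr_mono) auto
  then show ?thesis using assms by simp
next
  case False
  then have "x powr e \<le> x powr 0" using assms by (intro powr_mono') auto
  then show ?thesis using assms by simp
qed

lemma vol_powr:
  fixes w r e :: real and n :: nat
  assumes "0 < w" "0 < r"
  shows "(w * r ^ n) powr e = w powr e * r powr (real n * e)"
  using assms by (simp add: powr_mult powr_powr powr_realpow[symmetric])

lemma mult_bound3:
  fixes c c' a b :: real
  assumes "0 \<le> c" "c \<le> c'" "0 \<le> a" "a \<le> b"
  shows "c * a \<le> c' * b"
  using assms by (meson mult_mono order_trans mult_nonneg_nonneg order.refl)

theorem mainTheorem10:
  fixes p \<kappa> :: real
  assumes "1 < p" and "0 < \<kappa>"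
  shows "\<exists>c>0. \<forall>s r1 r2. 0 < s \<and> s < 1 \<and> 0 \<le> r1 \<and> 0 \<le> r2 \<and>
            measure lborel (ball (0::'a::euclidean_space) r2) \<ge> \<kappa> \<longrightarrow>
            fracL s p (ball (0::'a) r2) (- ball 0 (r2 + r1))
              + emeasure lborel (ball (0::'a) (r2 + r1) - ball 0 r2)
            \<ge> ennreal (c * measure lborel (ball (0::'a) r2) powr ((real DIM('a) - 1) / real DIM('a))
                   * lfac s p DIM('a) (measure lborel (ball (0::'a) r2)))"
proof -
  define n where "n = DIM('a)"
  have n1: "n \<ge> 1" by (simp add: n_def DIM_positive Suc_leI)
  define \<omega> where "\<omega> = unit_ball_vol DIM('a)"
  have \<omega>0: "\<omega> > 0" by (simp add: \<omega>_def)
  define r0 where "r0 = (\<kappa> / \<omega>) powr (1 / real n)"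
  have r00: "r0 > 0" using assms \<omega>0 by (simp add: r0_def)
  define m where "m = min 1 r0"
  have m: "0 < m" "m \<le> 1" using r00 by (auto simp: m_def)
  define cA where "cA = min (\<omega> ^ 2 / (3 ^ n * 6)) (\<omega> * m)"
  define cB where "cB = min \<omega> (\<omega> ^ 2 * m / (3 ^ n * 6 powr p))"
  define C1 where "C1 = \<omega> ^ 2 / 3 ^ (n + 2) / 2 ^ (n - 1)"
  define A where "A = \<bar>ln \<omega>\<bar> + real n * (1 - ln m)"
  define \<mu> where "\<mu> = min cB (min \<omega> C1)"
  define cC where "cC = \<mu> / (3 * A)"
  define W where "W = max 1 \<omega>"
  define c where "c = min cA (min cB cC) / W"
  have lnm: "ln m \<le> 0" using m by simp
  have A1: "A \<ge> 1"
  proof -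
    have "real n * (1 - ln m) \<ge> 1 * 1" using n1 lnm by (intro mult_mono) auto
    then show ?thesis unfolding A_def by linarith
  qed
  have cA0: "cA > 0" using \<omega>0 m by (simp add: cA_def)
  have cB0: "cB > 0" using \<omega>0 m by (simp add: cB_def)
  have C10: "C1 > 0" using \<omega>0 by (simp add: C1_def)
  have \<mu>0: "\<mu> > 0" using cB0 C10 \<omega>0 by (simp add: \<mu>_def)
  have cC0: "cC > 0" using \<mu>0 A1 by (simp add: cC_def)
  have W1: "W \<ge> 1" by (simp add: W_def)
  have c0: "c > 0" using cA0 cB0 cC0 W1 by (simp add: c_def)
  have cleA: "c * W \<le> cA" and cleB: "c * W \<le> cB" and cleC: "c * W \<le> cC"
    using W1 by (auto simp: c_def)
  show ?thesis
  proof (intro exI[of _ c] conjI allI impI)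
    show "c > 0" by (rule c0)
    fix s r1 r2 :: real
    assume H: "0 < s \<and> s < 1 \<and> 0 \<le> r1 \<and> 0 \<le> r2 \<and> measure lborel (ball (0::'a) r2) \<ge> \<kappa>"
    define r where "r = r2"
    define t where "t = r1"
    have s: "0 < s" "s < 1" and t: "0 \<le> t" and r0': "0 \<le> r" using H by (auto simp: r_def t_def)
    define v where "v = measure lborel (ball (0::'a) r)"
    have v: "v = \<omega> * r ^ n" unfolding v_def \<omega>_def n_def using content_ball[of r "0::'a", OF r0'] by simp
    have vk: "v \<ge> \<kappa>" using H by (simp add: v_def r_def)
    have r: "r > 0"
    proof (rule ccontr)
      assume "\<not> r > 0" then have "r = 0" using r0' by simp
      then have "v = 0" using v n1 by simp
      then show False using vk assms by simp
    qed
    have "r ^ n \<ge> \<kappa> / \<omega>" using vk v \<omega>0 by (simp add: field_simps mult.commute)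
    then have "(r ^ n) powr (1 / real n) \<ge> r0" unfolding r0_def using assms \<omega>0
      by (intro powr_mono2) auto
    moreover have "(r ^ n) powr (1 / real n) = r" using r n1
      by (simp add: powr_realpow[symmetric] powr_powr)
    ultimately have rm: "m \<le> r" by (simp add: m_def)
    define L where "L = fracL s p (ball (0::'a) r) (- ball 0 (r + t))"
    define M where "M = emeasure lborel (ball (0::'a) (r + t) - ball 0 r)"
    define X where "X = r ^ (n - 1)"
    have X0: "X > 0" using r by (simp add: X_def)
    have vp1: "v powr ((real n - 1) / real n) = \<omega> powr ((real n - 1) / real n) * X"
    proof -
      have "v powr ((real n - 1) / real n) = \<omega> powr ((real n - 1) / real n) * r powr (real n * ((real n - 1) / real n))"
        unfolding v using \<omega>0 r by (rule vol_powr)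
      moreover have "r powr (real n * ((real n - 1) / real n)) = X"
        using n1 r by (simp add: X_def powr_realpow[symmetric] of_nat_diff)
      ultimately show ?thesis by simp
    qed
    have vpW: "v powr ((real n - 1) / real n) \<le> W * X"
    proof -
      have "\<omega> powr ((real n - 1) / real n) \<le> W" unfolding W_def using \<omega>0 n1
        by (intro powr_le_max1) auto
      then show ?thesis using vp1 X0 by (simp add: mult_right_mono)
    qed
    have goal_form: "ennreal (c * v powr ((real n - 1) / real n) * lfac s p n v) \<le> L + M \<Longrightarrow> ennreal (c * measure lborel (ball (0::'a) r2) powr ((real DIM('a) - 1) / real DIM('a))
                   * lfac s p DIM('a) (measure lborel (ball (0::'a) r2))) \<le> fracL s p (ball (0::'a) r2) (- ball 0 (r2 + r1))
              + emeasure lborel (ball (0::'a) (r2 + r1) - ball 0 r2)"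
      by (simp add: L_def M_def v_def r_def t_def n_def)
    have sp0: "0 \<le> s * p" using s assms by simp
    consider "s * p < 1" | "s * p = 1" | "s * p > 1" by linarith
    then have G: "ennreal (c * v powr ((real n - 1) / real n) * lfac s p n v) \<le> L + M"
    proof cases
      case 1
      have "s < 1 / p" using 1 assms by (simp add: field_simps)
      then have lf: "lfac s p n v = v powr ((1 - s * p) / real n)" by (simp add: lfac_def)
      have "v powr ((real n - 1) / real n) * v powr ((1 - s * p) / real n) = v powr ((real n - s * p) / real n)"
        using n1 by (simp add: powr_add[symmetric] add_divide_distrib[symmetric])
      also have "\<dots> = \<omega> powr ((real n - s * p) / real n) * r powr (real n * ((real n - s * p) / real n))"
        unfolding v using \<omega>0 r by (rule vol_powr)
      also have "\<dots> = \<omega> powr ((real n - s * p) / real n) * r powr (real n - s * p)" using n1 by simp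
      also have "\<dots> \<le> W * r powr (real n - s * p)"
      proof -
        have "\<omega> powr ((real n - s * p) / real n) \<le> W" unfolding W_def using \<omega>0 n1 1 sp0
          by (intro powr_le_max1) auto
        then show ?thesis by (simp add: mult_right_mono)
      qed
      finally have Phi: "v powr ((real n - 1) / real n) * lfac s p n v \<le> W * r powr (real n - s * p)"
        using lf by simp
      have "c * v powr ((real n - 1) / real n) * lfac s p n v \<le> c * (W * r powr (real n - s * p))"
        using Phi c0 by (simp add: mult.assoc mult_left_mono)
      also have "\<dots> \<le> cA * r powr (real n - s * p)"
        using cleA by (simp add: mult.assoc[symmetric] mult_right_mono)
      finally have "ennreal (c * v powr ((real n - 1) / real n) * lfac s p n v) \<le> ennreal (cA * r powr (real n - s * p))"
        by (rule ennreal_leI)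
      also have "\<dots> \<le> L + M"
        using A_bound[OF s(1) s(2) assms(1) 1 r t m rm, where 'a='a]
        unfolding L_def M_def cA_def \<omega>_def n_def by simp
      finally show ?thesis .
    next
      case 3
      have "\<not> s < 1 / p" "s \<noteq> 1 / p" using 3 assms by (auto simp: field_simps)
      then have lf: "lfac s p n v = 1" by (simp add: lfac_def)
      have "c * v powr ((real n - 1) / real n) * lfac s p n v \<le> c * (W * X)"
        using vpW c0 lf by (simp add: mult_left_mono)
      also have "\<dots> \<le> cB * X"
        using cleB X0 by (simp add: mult.assoc[symmetric] mult_right_mono)
      finally have "ennreal (c * v powr ((real n - 1) / real n) * lfac s p n v) \<le> ennreal (cB * X)"
        by (rule ennreal_leI)
      also have "\<dots> \<le> L + M"
        using B_bound[OF s(1) s(2) assms(1) _ r t m rm, where 'a='a] 3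
        unfolding L_def M_def cB_def \<omega>_def n_def X_def by simp
      finally show ?thesis .
    next
      case 2
      have "s = 1 / p" using 2 assms by (auto simp: field_simps)
      then have lf: "lfac s p n v = \<bar>ln v\<bar>" by (simp add: lfac_def)
      obtain K :: nat where K: "ennreal (real K * (\<omega> ^ 2 / 3 ^ (n + 2) * (r / 2) ^ (n - 1))) \<le> L"
          "ln r \<le> real K + 1 + t"
        using C_bound[of s p r t, where 'a='a] s assms 2 r t
        unfolding L_def \<omega>_def n_def by auto
      have eqC: "real K * (\<omega> ^ 2 / 3 ^ (n + 2) * (r / 2) ^ (n - 1)) = C1 * real K * X"
        by (simp add: C1_def X_def power_divide)
      define Z where "Z = t + real K"
      have Z0: "Z \<ge> 0" using t by (simp add: Z_def)
      have B1: "ennreal (cB * X) \<le> L + M"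
        using B_bound[OF s(1) s(2) assms(1) _ r t m rm, where 'a='a] 2
        unfolding L_def M_def cB_def \<omega>_def n_def X_def by simp
      have B2: "ennreal (\<omega> * t * X) \<le> L + M"
      proof -
        have "ennreal (\<omega> * t * X) \<le> M" using M_bound[OF r t, where 'a='a]
          unfolding M_def \<omega>_def n_def X_def by simp
        also have "M \<le> L + M" by (rule add_increasing) auto
        finally show ?thesis .
      qed
      have B3: "ennreal (C1 * real K * X) \<le> L + M"
      proof -
        have "ennreal (C1 * real K * X) \<le> L" using K(1) eqC by simp
        also have "L \<le> L + M" by (rule add_increasing2) auto
        finally show ?thesis .
      qed
      have Bmax: "ennreal (max (cB * X) (max (\<omega> * t * X) (C1 * real K * X))) \<le> L + M"
        using B1 B2 B3 by (simp add: max_def)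
      have sumle: "\<mu> / 3 * (1 + Z) * X \<le> max (cB * X) (max (\<omega> * t * X) (C1 * real K * X))"
      proof -
        have "\<mu> * 1 \<le> cB" "\<mu> * t \<le> \<omega> * t" "\<mu> * real K \<le> C1 * real K"
          using t by (auto simp: \<mu>_def intro!: mult_right_mono)
        then have "\<mu> * (1 + Z) \<le> cB + \<omega> * t + C1 * real K"
          by (simp add: Z_def distrib_left)
        then have "\<mu> * (1 + Z) * X \<le> (cB + \<omega> * t + C1 * real K) * X"
          using X0 by (simp add: mult_right_mono)
        then have "\<mu> * (1 + Z) * X \<le> cB * X + \<omega> * t * X + C1 * real K * X"
          by (simp add: distrib_right)
        then show ?thesis by (simp add: max_def)
      qed
      have lnv: "\<bar>ln v\<bar> \<le> A * (1 + Z)"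
      proof -
        have "ln v = ln \<omega> + real n * ln r" using \<omega>0 r by (simp add: v ln_mult ln_realpow)
        moreover have "\<bar>ln r\<bar> \<le> - ln m + (1 + Z)"
        proof -
          have "ln m \<le> ln r" using m rm by simp
          then show ?thesis using K(2) lnm t unfolding Z_def abs_le_iff by linarith
        qed
        moreover have "\<bar>real n * ln r\<bar> = real n * \<bar>ln r\<bar>" by (simp add: abs_mult)
        ultimately have "\<bar>ln v\<bar> \<le> \<bar>ln \<omega>\<bar> + real n * (- ln m + (1 + Z))"
          by (smt (verit) mult_left_mono of_nat_0_le_iff)
        moreover have "\<bar>ln \<omega>\<bar> \<le> \<bar>ln \<omega>\<bar> * (1 + Z)" using Z0 by (simp add: distrib_left)
        moreover have "- ln m + (1 + Z) \<le> (1 - ln m) * (1 + Z)"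
        proof -
          have "0 \<le> (- ln m) * Z" using lnm Z0 by (intro mult_nonneg_nonneg) auto
          then show ?thesis by (simp add: algebra_simps)
        qed
        then have "real n * (- ln m + (1 + Z)) \<le> real n * ((1 - ln m) * (1 + Z))"
          by (simp add: mult_left_mono)
        ultimately show ?thesis by (simp add: A_def algebra_simps)
      qed
      have "v powr ((real n - 1) / real n) * lfac s p n v \<le> (W * X) * (A * (1 + Z))"
      proof -
        have "0 \<le> W * X" using W1 X0 by simp
        then show ?thesis unfolding lf using vpW lnv by (intro mult_mono) auto
      qed
      then have "c * v powr ((real n - 1) / real n) * lfac s p n v \<le> c * ((W * X) * (A * (1 + Z)))"
        using c0 by (simp add: mult.assoc mult_left_mono)
      also have "\<dots> = (c * W) * A * (1 + Z) * X" by (simp add: algebra_simps)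
      also have "\<dots> \<le> cC * A * (1 + Z) * X"
        using cleC A1 Z0 X0 by (intro mult_right_mono) auto
      also have "\<dots> = \<mu> / 3 * (1 + Z) * X" using A1 by (simp add: cC_def)
      also note sumle
      finally have "ennreal (c * v powr ((real n - 1) / real n) * lfac s p n v) \<le> ennreal (max (cB * X) (max (\<omega> * t * X) (C1 * real K * X)))"
        by (rule ennreal_leI)
      also note Bmax
      finally show ?thesis .
    qed
    from goal_form[OF G] show "ennreal (c * measure lborel (ball (0::'a) r2) powr ((real DIM('a) - 1) / real DIM('a))
                   * lfac s p DIM('a) (measure lborel (ball (0::'a) r2))) \<le> fracL s p (ball (0::'a) r2) (- ball 0 (r2 + r1))
              + emeasure lborel (ball (0::'a) (r2 + r1) - ball 0 r2)" .
  qed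
qed

end
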